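(* Let $X$ be a finite group with $|X|=n$ and let $S\subseteq X$ be a generating set with $|S|=d$ and $S^{-1}=S$. Let $G$ be the Cayley graph $(X,S)$, and suppose $G$ is not bipartite. Assume $\beta(G)<\tfrac{1}{16d}$. Then $$h(G)\leq \frac{100\,\beta(G)}{1-16d\,\beta(G)}.$$
   Context: The Cayley graph $(X,S)$ has vertex set $X$ and edges $g\sim gs$ for all $g\in X$, $s\in S$; it is $d$-regular. For $A,B\subseteq X$, $e(A,B)$ is the number of ordered pairs $(a,b)\in A\times B$ with $a\sim b$. For $A\subseteq X$, $\partial(A)$ is the set of edges with exactly one endpoint in $A$. The edge Cheeger constant is $h(G)=\min\{|\partial(A)|/(d|A|) : A\subseteq X,\ 0<|A|\le n/2\}$. For disjoint $L,R\subseteq X$ with $L\cup R\ne\emptyset$, $b(L,R)=\dfrac{e(L,L)+e(R,R)+|\partial(L\cup R)|}{d\,|L\cup R|}$, and the bipartiteness constant is $\beta(G)=\min_{L,R}b(L,R)$ over all such pairs. *)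

theory Defs
  imports Complex_Main "HOL-Algebra.Generated_Groups"
begin

definition cay_adj :: "('a, 'b) monoid_scheme \<Rightarrow> 'a set \<Rightarrow> 'a \<Rightarrow> 'a \<Rightarrow> bool" where
  "cay_adj G S g h \<longleftrightarrow> g \<in> carrier G \<and> (\<exists>s\<in>S. h = g \<otimes>\<^bsub>G\<^esub> s)"

definition e_count :: "('a, 'b) monoid_scheme \<Rightarrow> 'a set \<Rightarrow> 'a set \<Rightarrow> 'a set \<Rightarrow> nat" where
  "e_count G S A B = card {(a, b). a \<in> A \<and> b \<in> B \<and> cay_adj G S a b}"

definition cay_edges :: "('a, 'b) monoid_scheme \<Rightarrow> 'a set \<Rightarrow> 'a set set" where
  "cay_edges G S = {{a, b} | a b. cay_adj G S a b}"

definition edge_boundary :: "('a, 'b) monoid_scheme \<Rightarrow> 'a set \<Rightarrow> 'a set \<Rightarrow> 'a set set" where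
  "edge_boundary G S A = {e \<in> cay_edges G S. card (e \<inter> A) = 1}"

definition cheeger :: "('a, 'b) monoid_scheme \<Rightarrow> 'a set \<Rightarrow> real" where
  "cheeger G S = Min {real (card (edge_boundary G S A)) / (real (card S) * real (card A)) | A.
      A \<subseteq> carrier G \<and> 0 < card A \<and> real (card A) \<le> real (card (carrier G)) / 2}"

definition bval :: "('a, 'b) monoid_scheme \<Rightarrow> 'a set \<Rightarrow> 'a set \<Rightarrow> 'a set \<Rightarrow> real" where
  "bval G S L R = (real (e_count G S L L) + real (e_count G S R R)
      + real (card (edge_boundary G S (L \<union> R)))) / (real (card S) * real (card (L \<union> R)))"

definition bipartiteness :: "('a, 'b) monoid_scheme \<Rightarrow> 'a set \<Rightarrow> real" where
  "bipartiteness G S = Min {bval G S L R | L R.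
      L \<subseteq> carrier G \<and> R \<subseteq> carrier G \<and> L \<inter> R = {} \<and> L \<union> R \<noteq> {}}"

definition cay_bipartite :: "('a, 'b) monoid_scheme \<Rightarrow> 'a set \<Rightarrow> bool" where
  "cay_bipartite G S \<longleftrightarrow> (\<exists>L R. L \<union> R = carrier G \<and> L \<inter> R = {}
      \<and> (\<forall>a\<in>L. \<forall>b\<in>L. \<not> cay_adj G S a b) \<and> (\<forall>a\<in>R. \<forall>b\<in>R. \<not> cay_adj G S a b))"

end

theory Submission
  imports Defs
begin

locale cay = group G for G :: "('a, 'b) monoid_scheme" (structure) +
  fixes S :: "'a set"
  assumes finX: "finite (carrier G)"
    and SX: "S \<subseteq> carrier G"
    and Sinv: "\<forall>s\<in>S. inv s \<in> S"
    and one_notin: "\<one> \<notin> S"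
begin

abbreviation adj where "adj \<equiv> cay_adj G S"

lemma adj_X: "adj x y \<Longrightarrow> x \<in> carrier G \<and> y \<in> carrier G"
  using SX by (auto simp: cay_adj_def)

lemma adj_mult: "x \<in> carrier G \<Longrightarrow> s \<in> S \<Longrightarrow> adj x (x \<otimes> s)"
  by (auto simp: cay_adj_def)

lemma adj_sym: "adj x y \<Longrightarrow> adj y x"
proof -
  assume "adj x y"
  then obtain s where x: "x \<in> carrier G" and s: "s \<in> S" and y: "y = x \<otimes> s"
    by (auto simp: cay_adj_def)
  have sX: "s \<in> carrier G" using s SX by auto
  have "x = y \<otimes> inv s" using x sX y by (simp add: m_assoc)
  moreover have "inv s \<in> S" using Sinv s by auto
  moreover have "y \<in> carrier G" using x sX y by auto
  ultimately show ?thesis by (auto simp: cay_adj_def)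
qed

lemma adj_left: "h \<in> carrier G \<Longrightarrow> adj x y \<Longrightarrow> adj (h \<otimes> x) (h \<otimes> y)"
proof -
  assume h: "h \<in> carrier G" and "adj x y"
  then obtain s where x: "x \<in> carrier G" and s: "s \<in> S" and y: "y = x \<otimes> s"
    by (auto simp: cay_adj_def)
  have sX: "s \<in> carrier G" using s SX by auto
  have "h \<otimes> y = (h \<otimes> x) \<otimes> s" using h x sX y by (simp add: m_assoc)
  then show ?thesis using h x s by (auto simp: cay_adj_def)
qed

lemma adj_left_rev: "h \<in> carrier G \<Longrightarrow> x \<in> carrier G \<Longrightarrow> y \<in> carrier G \<Longrightarrow>
   adj (h \<otimes> x) (h \<otimes> y) \<Longrightarrow> adj x y"
  using adj_left[of "inv h" "h \<otimes> x" "h \<otimes> y"] by (simp add: m_assoc[symmetric])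

lemma adj_neq: "adj x y \<Longrightarrow> x \<noteq> y"
proof
  assume "adj x y" "x = y"
  then obtain s where x: "x \<in> carrier G" and s: "s \<in> S" and y: "x = x \<otimes> s"
    by (auto simp: cay_adj_def)
  have sX: "s \<in> carrier G" using s SX by auto
  then have "s = \<one>" using x y by simp
  then show False using s one_notin by simp
qed

definition Out where "Out A = {(x,y). x \<in> A \<and> y \<notin> A \<and> adj x y}"

lemma finite_Out: "finite (Out A)"
proof -
  have "Out A \<subseteq> carrier G \<times> carrier G" using adj_X by (auto simp: Out_def)
  then show ?thesis using finX finite_subset by blast
qed

lemma finite_bd: "finite (edge_boundary G S A)"
proof -
  have "edge_boundary G S A \<subseteq> Pow (carrier G)"
    using adj_X by (auto simp: edge_boundary_def cay_edges_def)
  then show ?thesis using finX finite_subset by blast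
qed

lemma bd_le_Out: "card (edge_boundary G S A) \<le> card (Out A)"
proof -
  have "edge_boundary G S A \<subseteq> (\<lambda>(x,y). {x,y}) ` Out A"
  proof
    fix e assume "e \<in> edge_boundary G S A"
    then obtain a b where e: "e = {a,b}" and ab: "adj a b" and c1: "card (e \<inter> A) = 1"
      by (auto simp: edge_boundary_def cay_edges_def)
    have ne: "a \<noteq> b" using adj_neq ab by auto
    show "e \<in> (\<lambda>(x,y). {x,y}) ` Out A"
    proof (cases "a \<in> A")
      case True
      have "b \<notin> A"
      proof
        assume "b \<in> A"
        then have "e \<inter> A = {a,b}" using True e by auto
        then show False using c1 ne by simp
      qed
      then have "(a,b) \<in> Out A" using True ab by (simp add: Out_def)
      then show ?thesis using e by force
    next
      case False
      have "b \<in> A"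
      proof (rule ccontr)
        assume "b \<notin> A"
        then have "e \<inter> A = {}" using False e by auto
        then show False using c1 by simp
      qed
      then have "(b,a) \<in> Out A" using False adj_sym[OF ab] by (simp add: Out_def)
      then show ?thesis using e by force
    qed
  qed
  then show ?thesis using finite_Out card_image_le card_mono
    by (metis (no_types, lifting) finite_imageI le_trans)
qed

lemma Out_le_bd: "card (Out A) \<le> card (edge_boundary G S A)"
proof -
  have inj: "inj_on (\<lambda>(x,y). {x,y}) (Out A)"
    unfolding inj_on_def Out_def by (auto simp: doubleton_eq_iff)
  have "(\<lambda>(x,y). {x,y}) ` Out A \<subseteq> edge_boundary G S A"
  proof
    fix e assume "e \<in> (\<lambda>(x,y). {x,y}) ` Out A"
    then obtain x y where e: "e = {x,y}" and o: "x \<in> A" "y \<notin> A" "adj x y"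
      by (auto simp: Out_def)
    have "e \<inter> A = {x}" using e o by auto
    then show "e \<in> edge_boundary G S A" using e o
      by (auto simp: edge_boundary_def cay_edges_def)
  qed
  then show ?thesis using card_inj_on_le[OF inj _ finite_bd] by blast
qed

lemma Out_compl: "card (Out (carrier G - A)) \<le> card (Out A)"
proof -
  have "Out (carrier G - A) \<subseteq> (\<lambda>(x,y). (y,x)) ` Out A"
  proof
    fix p assume "p \<in> Out (carrier G - A)"
    then obtain x y where p: "p = (x,y)" "x \<in> carrier G - A" "y \<notin> carrier G - A" "adj x y"
      by (auto simp: Out_def)
    then have "(y,x) \<in> Out A" using adj_X adj_sym by (auto simp: Out_def)
    then show "p \<in> (\<lambda>(x,y). (y,x)) ` Out A" using p by force
  qed
  then show ?thesis using finite_Out card_image_le card_mono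
    by (metis (no_types, lifting) finite_imageI le_trans)
qed

end

locale cay2 = cay +
  fixes L R :: "'a set"
  assumes LX: "L \<subseteq> carrier G" and RX: "R \<subseteq> carrier G" and disj: "L \<inter> R = {}"
begin

definition "U = L \<union> R"
definition "W = carrier G - U"
definition f :: "'a \<Rightarrow> int" where "f x = (if x \<in> L then 1 else if x \<in> R then -1 else 0)"
definition "Bad = {(a,b). a \<in> L \<and> b \<in> L \<and> adj a b} \<union> {(a,b). a \<in> R \<and> b \<in> R \<and> adj a b}"
definition T :: "'a \<Rightarrow> int \<Rightarrow> 'a set" where
  "T h e = {x \<in> U. h \<otimes> x \<in> U \<and> f (h \<otimes> x) = e * f x}"

lemma UX: "U \<subseteq> carrier G" using LX RX by (auto simp: U_def)
lemma finU: "finite U" using UX finX finite_subset by blast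
lemma finW: "finite W" using finX by (auto simp: W_def)
lemma TU: "T h e \<subseteq> U" by (auto simp: T_def)
lemma finT: "finite (T h e)" using TU finU finite_subset by blast

lemma f_U: "x \<in> U \<Longrightarrow> f x = 1 \<or> f x = -1" by (auto simp: f_def U_def)
lemma f_eq: "x \<in> U \<Longrightarrow> y \<in> U \<Longrightarrow> f x = f y \<longleftrightarrow> (x \<in> L \<and> y \<in> L) \<or> (x \<in> R \<and> y \<in> R)"
  using disj by (auto simp: f_def U_def)

lemma finBad: "finite Bad"
proof -
  have "Bad \<subseteq> carrier G \<times> carrier G" using LX RX by (auto simp: Bad_def)
  then show ?thesis using finX finite_subset by blast
qed

lemma card_Bad: "card Bad \<le> e_count G S L L + e_count G S R R"
  unfolding Bad_def e_count_def by (rule card_Un_le)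

lemma card_pullback:
  assumes h: "h \<in> carrier G" and fin: "finite Z"
  shows "card {(x,y). x \<in> carrier G \<and> y \<in> carrier G \<and> (h \<otimes> x, h \<otimes> y) \<in> Z} \<le> card Z"
proof -
  have inj: "inj_on (\<lambda>(x,y). (h \<otimes> x, h \<otimes> y)) {(x,y). x \<in> carrier G \<and> y \<in> carrier G \<and> (h \<otimes> x, h \<otimes> y) \<in> Z}"
    using h unfolding inj_on_def by auto
  show ?thesis by (rule card_inj_on_le[OF inj _ fin]) auto
qed

lemma card_pull1:
  assumes h: "h \<in> carrier G" and fin: "finite Z"
  shows "card {x \<in> carrier G. h \<otimes> x \<in> Z} \<le> card Z"
proof -
  have inj: "inj_on (\<lambda>x. h \<otimes> x) {x \<in> carrier G. h \<otimes> x \<in> Z}"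
    using h unfolding inj_on_def by auto
  show ?thesis by (rule card_inj_on_le[OF inj _ fin]) auto
qed

lemma card_pull1r:
  assumes h: "h \<in> carrier G" and fin: "finite Z"
  shows "card {x \<in> carrier G. x \<otimes> h \<in> Z} \<le> card Z"
proof -
  have inj: "inj_on (\<lambda>x. x \<otimes> h) {x \<in> carrier G. x \<otimes> h \<in> Z}"
    using h unfolding inj_on_def by auto
  show ?thesis by (rule card_inj_on_le[OF inj _ fin]) auto
qed

lemma Out_T:
  assumes h: "h \<in> carrier G" and e: "e = 1 \<or> e = -1"
  shows "card (Out (T h e)) \<le> 2 * card (Out U) + 2 * card Bad"
proof -
  let ?O2 = "{(x,y). x \<in> carrier G \<and> y \<in> carrier G \<and> (h \<otimes> x, h \<otimes> y) \<in> Out U}"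
  let ?O4 = "{(x,y). x \<in> carrier G \<and> y \<in> carrier G \<and> (h \<otimes> x, h \<otimes> y) \<in> Bad}"
  have sub: "Out (T h e) \<subseteq> Out U \<union> ?O2 \<union> Bad \<union> ?O4"
  proof
    fix p assume "p \<in> Out (T h e)"
    then obtain x y where p: "p = (x,y)" and xT: "x \<in> T h e" and yT: "y \<notin> T h e" and a: "adj x y"
      by (auto simp: Out_def)
    have xX: "x \<in> carrier G" and yX: "y \<in> carrier G" using adj_X[OF a] by auto
    have xU: "x \<in> U" and hxU: "h \<otimes> x \<in> U" and fx: "f (h \<otimes> x) = e * f x" using xT by (auto simp: T_def)
    have ha: "adj (h \<otimes> x) (h \<otimes> y)" using adj_left[OF h a] .
    show "p \<in> Out U \<union> ?O2 \<union> Bad \<union> ?O4"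
    proof (cases "y \<in> U")
      case False
      then show ?thesis using p xU a by (auto simp: Out_def)
    next
      case yU: True
      show ?thesis
      proof (cases "h \<otimes> y \<in> U")
        case False
        then show ?thesis using p hxU ha xX yX by (auto simp: Out_def)
      next
        case hyU: True
        have fy: "f (h \<otimes> y) \<noteq> e * f y" using yT yU hyU by (auto simp: T_def)
        have f1: "f x = 1 \<or> f x = -1" using f_U[OF xU] .
        have f2: "f y = 1 \<or> f y = -1" using f_U[OF yU] .
        have f3: "f (h \<otimes> x) = 1 \<or> f (h \<otimes> x) = -1" using f_U[OF hxU] .
        have f4: "f (h \<otimes> y) = 1 \<or> f (h \<otimes> y) = -1" using f_U[OF hyU] .
        have "f x = f y \<or> f (h \<otimes> x) = f (h \<otimes> y)"
          using e fx fy f1 f2 f3 f4 by auto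
        then show ?thesis
        proof
          assume "f x = f y"
          then have "(x,y) \<in> Bad" using f_eq[OF xU yU] a by (auto simp: Bad_def)
          then show ?thesis using p by auto
        next
          assume "f (h \<otimes> x) = f (h \<otimes> y)"
          then have "(h \<otimes> x, h \<otimes> y) \<in> Bad" using f_eq[OF hxU hyU] ha by (auto simp: Bad_def)
          then show ?thesis using p xX yX by auto
        qed
      qed
    qed
  qed
  have "card (Out (T h e)) \<le> card (Out U \<union> ?O2 \<union> Bad \<union> ?O4)"
  proof (rule card_mono[OF _ sub])
    have "finite ?O2" by (rule finite_subset[of _ "carrier G \<times> carrier G"]) (auto simp: finX)
    moreover have "finite ?O4" by (rule finite_subset[of _ "carrier G \<times> carrier G"]) (auto simp: finX)
    ultimately show "finite (Out U \<union> ?O2 \<union> Bad \<union> ?O4)" using finite_Out finBad by auto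
  qed
  also have "\<dots> \<le> card (Out U) + card ?O2 + card Bad + card ?O4"
    by (meson card_Un_le add_right_mono le_trans)
  also have "\<dots> \<le> 2 * card (Out U) + 2 * card Bad"
    using card_pullback[OF h finite_Out, of U] card_pullback[OF h finBad] by linarith
  finally show ?thesis .
qed

lemma T_cover:
  assumes h: "h \<in> carrier G"
  shows "card U \<le> card (T h 1) + card (T h (-1)) + card W"
proof -
  let ?O = "{x \<in> carrier G. h \<otimes> x \<in> W}"
  have "U \<subseteq> T h 1 \<union> T h (-1) \<union> ?O"
  proof
    fix x assume xU: "x \<in> U"
    have xX: "x \<in> carrier G" using xU UX by auto
    show "x \<in> T h 1 \<union> T h (-1) \<union> ?O"
    proof (cases "h \<otimes> x \<in> U")
      case True
      then have "f (h \<otimes> x) = f x \<or> f (h \<otimes> x) = - f x" using f_U[OF xU] f_U[OF True] by auto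
      then show ?thesis using True xU by (auto simp: T_def)
    next
      case False
      then show ?thesis using xX h by (auto simp: W_def)
    qed
  qed
  then have "card U \<le> card (T h 1 \<union> T h (-1) \<union> ?O)"
    by (rule card_mono[rotated]) (auto simp: finT finX)
  also have "\<dots> \<le> card (T h 1) + card (T h (-1)) + card ?O"
    by (meson card_Un_le add_right_mono le_trans)
  also have "\<dots> \<le> card (T h 1) + card (T h (-1)) + card W"
    using card_pull1[OF h finW] by simp
  finally show ?thesis .
qed

lemma T_disj: "T h 1 \<inter> T h (-1) = {}"
  using f_U by (fastforce simp: T_def)

lemma T_comp:
  assumes h: "h \<in> carrier G" and k: "k \<in> carrier G"
    and e1: "e1 = 1 \<or> e1 = -1" and e2: "e2 = 1 \<or> e2 = -1"
  shows "card (T (h \<otimes> k) (-(e1 * e2))) \<le> card W + card (T k (-e2)) + card (T h (-e1))"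
proof -
  let ?O = "{x \<in> carrier G. k \<otimes> x \<in> W}"
  let ?P = "{x \<in> carrier G. k \<otimes> x \<in> T h (-e1)}"
  have "T (h \<otimes> k) (-(e1 * e2)) \<subseteq> ?O \<union> T k (-e2) \<union> ?P"
  proof
    fix x assume xT: "x \<in> T (h \<otimes> k) (-(e1 * e2))"
    have xU: "x \<in> U" using xT by (auto simp: T_def)
    have xX: "x \<in> carrier G" using xU UX by auto
    have eq: "h \<otimes> k \<otimes> x = h \<otimes> (k \<otimes> x)" using h k xX by (simp add: m_assoc)
    have hkx: "h \<otimes> (k \<otimes> x) \<in> U" and fhkx: "f (h \<otimes> (k \<otimes> x)) = -(e1 * e2) * f x"
      using xT eq by (auto simp: T_def)
    show "x \<in> ?O \<union> T k (-e2) \<union> ?P"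
    proof (cases "k \<otimes> x \<in> U")
      case False
      then show ?thesis using xX k by (auto simp: W_def)
    next
      case kxU: True
      have f1: "f x = 1 \<or> f x = -1" using f_U[OF xU] .
      have f2: "f (k \<otimes> x) = 1 \<or> f (k \<otimes> x) = -1" using f_U[OF kxU] .
      show ?thesis
      proof (cases "f (k \<otimes> x) = -e2 * f x")
        case True
        then show ?thesis using xU kxU by (auto simp: T_def)
      next
        case False
        then have "f (k \<otimes> x) = e2 * f x" using f1 f2 e2 by auto
        then have "f (h \<otimes> (k \<otimes> x)) = -e1 * f (k \<otimes> x)" using fhkx by simp
        then have "k \<otimes> x \<in> T h (-e1)" using kxU hkx by (auto simp: T_def)
        then show ?thesis using xX by auto
      qed
    qed
  qed
  then have "card (T (h \<otimes> k) (-(e1 * e2))) \<le> card (?O \<union> T k (-e2) \<union> ?P)"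
    by (rule card_mono[rotated]) (auto simp: finT finX)
  also have "\<dots> \<le> card ?O + card (T k (-e2)) + card ?P"
    by (meson card_Un_le add_right_mono le_trans)
  also have "\<dots> \<le> card W + card (T k (-e2)) + card (T h (-e1))"
    using card_pull1[OF k finW] card_pull1[OF k finT, of h "-e1"] by simp
  finally show ?thesis .
qed



lemma main:
  assumes Une: "U \<noteq> {}"
    and wsmall: "100 * card W \<le> card U"
    and dich: "\<forall>h\<in>carrier G. 50 * card (T h 1) < card U \<or> 50 * card (T h (-1)) < card U"
    and nb: "\<not> cay_bipartite G S"
  shows "card U \<le> 2 * card Bad"
proof -
  define m where "m = card U"
  define n where "n = card (carrier G)"
  define w where "w = card W"
  have mpos: "m > 0" using Une finU by (simp add: m_def card_gt_0_iff)
  have mn: "m \<le> n" using card_mono[OF finX UX] by (simp add: m_def n_def)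
  define \<sigma> :: "'a \<Rightarrow> int" where "\<sigma> h = (if 50 * card (T h (-1)) < m then 1 else -1)" for h
  have spm: "\<sigma> h = 1 \<or> \<sigma> h = -1" for h by (simp add: \<sigma>_def)
  have P: "50 * card (T h (- \<sigma> h)) < m" if h: "h \<in> carrier G" for h
    using dich h by (auto simp: \<sigma>_def m_def)
  have mult: "\<sigma> (h \<otimes> k) = \<sigma> h * \<sigma> k" if h: "h \<in> carrier G" and k: "k \<in> carrier G" for h k
  proof (rule ccontr)
    assume ne: "\<sigma> (h \<otimes> k) \<noteq> \<sigma> h * \<sigma> k"
    have hk: "h \<otimes> k \<in> carrier G" using h k by simp
    have e12: "\<sigma> h * \<sigma> k = 1 \<or> \<sigma> h * \<sigma> k = -1" using spm[of h] spm[of k] by auto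
    have s': "- \<sigma> (h \<otimes> k) = \<sigma> h * \<sigma> k" using ne spm[of "h \<otimes> k"] e12 by auto
    have a: "50 * card (T (h \<otimes> k) (\<sigma> h * \<sigma> k)) < m" using P[OF hk] s' by simp
    have b: "card (T (h \<otimes> k) (-(\<sigma> h * \<sigma> k))) \<le> w + card (T k (- \<sigma> k)) + card (T h (- \<sigma> h))"
      using T_comp[OF h k spm spm] by (simp add: w_def)
    have cov: "m \<le> card (T (h \<otimes> k) (\<sigma> h * \<sigma> k)) + card (T (h \<otimes> k) (-(\<sigma> h * \<sigma> k))) + w"
      using T_cover[OF hk] e12 by (auto simp: m_def w_def)
    show False using a b cov P[OF h] P[OF k] wsmall by (simp add: m_def w_def)
  qed
  have s1: "\<sigma> \<one> = 1" using mult[of \<one> \<one>] spm[of \<one>] by auto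
  have sinv: "\<sigma> (inv x) = \<sigma> x" if x: "x \<in> carrier G" for x
  proof -
    have "\<sigma> x * \<sigma> (inv x) = 1" using mult[of x "inv x"] x s1 by simp
    then show ?thesis using spm[of x] spm[of "inv x"] by auto
  qed
  obtain s where sS: "s \<in> S" and ss: "\<sigma> s = 1"
  proof (rule ccontr)
    assume "\<not> thesis"
    then have neg: "\<forall>s\<in>S. \<sigma> s = -1" using that spm by blast
    have "cay_bipartite G S"
      unfolding cay_bipartite_def
    proof (intro exI conjI)
      show "{x \<in> carrier G. \<sigma> x = 1} \<union> {x \<in> carrier G. \<sigma> x = -1} = carrier G" using spm by auto
      show "{x \<in> carrier G. \<sigma> x = 1} \<inter> {x \<in> carrier G. \<sigma> x = -1} = {}" by auto
      show "\<forall>a\<in>{x \<in> carrier G. \<sigma> x = 1}. \<forall>b\<in>{x \<in> carrier G. \<sigma> x = 1}. \<not> adj a b"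
        using neg SX mult by (fastforce simp: cay_adj_def)
      show "\<forall>a\<in>{x \<in> carrier G. \<sigma> x = -1}. \<forall>b\<in>{x \<in> carrier G. \<sigma> x = -1}. \<not> adj a b"
        using neg SX mult by (fastforce simp: cay_adj_def)
    qed
    then show False using nb by simp
  qed
  have sX: "s \<in> carrier G" using sS SX by auto
  define Gs where "Gs = {x \<in> U. x \<otimes> s \<in> U \<and> f (x \<otimes> s) = - f x}"
  define Bs where "Bs = {x \<in> U. x \<otimes> s \<in> U \<and> f (x \<otimes> s) = f x}"
  define Os where "Os = {x \<in> carrier G. x \<otimes> s \<in> W}"
  have finGs: "finite Gs" using finU by (simp add: Gs_def)
  have cover: "m \<le> card Gs + card Bs + card Os"
  proof -
    have "U \<subseteq> Gs \<union> Bs \<union> Os"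
    proof
      fix x assume xU: "x \<in> U"
      have xX: "x \<in> carrier G" using xU UX by auto
      show "x \<in> Gs \<union> Bs \<union> Os"
      proof (cases "x \<otimes> s \<in> U")
        case True
        then show ?thesis using xU f_U[OF xU] f_U[OF True] by (auto simp: Gs_def Bs_def)
      next
        case False
        then show ?thesis using xX sX by (auto simp: Os_def W_def)
      qed
    qed
    then have "m \<le> card (Gs \<union> Bs \<union> Os)"
      unfolding m_def by (rule card_mono[rotated]) (auto simp: Gs_def Bs_def Os_def finU finX)
    also have "\<dots> \<le> card Gs + card Bs + card Os"
      by (meson card_Un_le add_right_mono le_trans)
    finally show ?thesis .
  qed
  have Os_le: "card Os \<le> w" unfolding Os_def w_def using card_pull1r[OF sX finW] .
  have Bs_le: "card Bs \<le> card Bad"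
  proof -
    have inj: "inj_on (\<lambda>x. (x, x \<otimes> s)) Bs" by (auto simp: inj_on_def)
    have "(\<lambda>x. (x, x \<otimes> s)) ` Bs \<subseteq> Bad"
    proof
      fix p assume "p \<in> (\<lambda>x. (x, x \<otimes> s)) ` Bs"
      then obtain x where p: "p = (x, x \<otimes> s)" and xB: "x \<in> Bs" by auto
      have xU: "x \<in> U" and xsU: "x \<otimes> s \<in> U" and fe: "f (x \<otimes> s) = f x" using xB by (auto simp: Bs_def)
      have xX: "x \<in> carrier G" using xU UX by auto
      have a: "adj x (x \<otimes> s)" using adj_mult[OF xX sS] .
      have "f x = f (x \<otimes> s)" using fe by simp
      then show "p \<in> Bad" using f_eq[OF xU xsU] a p by (auto simp: Bad_def)
    qed
    then show ?thesis using card_inj_on_le[OF inj _ finBad] by blast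
  qed
  define H where "H = {h \<in> carrier G. \<sigma> h = 1}"
  define Tg where "Tg = Sigma H (\<lambda>h. T h (-1))"
  define D where "D = Sigma Gs (\<lambda>x. {z \<in> U. \<sigma> z = \<sigma> x})"
  have finH: "finite H" using finX by (simp add: H_def)
  have finTg: "finite Tg" unfolding Tg_def using finH finT by (rule finite_SigmaI)
  have Tg_le: "50 * card Tg \<le> n * m"
  proof -
    have "50 * card Tg = (\<Sum>h\<in>H. 50 * card (T h (-1)))"
      unfolding Tg_def using finH finT by (simp add: sum_distrib_left)
    also have "\<dots> \<le> (\<Sum>h\<in>H. m)"
    proof (rule sum_mono)
      fix h assume "h \<in> H"
      then show "50 * card (T h (-1)) \<le> m" using P[of h] by (auto simp: H_def)
    qed
    also have "\<dots> = card H * m" by simp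
    also have "\<dots> \<le> n * m" using card_mono[OF finX, of H] by (auto simp: H_def n_def)
    finally show ?thesis .
  qed
  have D_le: "card D \<le> 2 * card Tg"
  proof -
    define D1 where "D1 = {p \<in> D. f (snd p) = - f (fst p)}"
    define D2 where "D2 = {p \<in> D. f (snd p) = f (fst p)}"
    have finD: "finite D" unfolding D_def using finGs finU by (intro finite_SigmaI) auto
    have DD: "D \<subseteq> D1 \<union> D2"
    proof
      fix p assume pD: "p \<in> D"
      then obtain x z where p: "p = (x,z)" and xG: "x \<in> Gs" and zU: "z \<in> U" by (auto simp: D_def)
      have xU: "x \<in> U" using xG by (auto simp: Gs_def)
      show "p \<in> D1 \<union> D2" using pD p f_U[OF xU] f_U[OF zU] by (auto simp: D1_def D2_def)
    qed
    have c1: "card D1 \<le> card Tg"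
    proof -
      have inj: "inj_on (\<lambda>(x,z). (z \<otimes> inv x, x)) D1"
      proof (rule inj_onI)
        fix p q assume "p \<in> D1" "q \<in> D1" and eq: "(\<lambda>(x,z). (z \<otimes> inv x, x)) p = (\<lambda>(x,z). (z \<otimes> inv x, x)) q"
        obtain x z x' z' where p: "p = (x,z)" "q = (x',z')" by (cases p, cases q) auto
        have X: "x \<in> carrier G" "z \<in> carrier G" "z' \<in> carrier G"
          using \<open>p \<in> D1\<close> \<open>q \<in> D1\<close> p UX by (auto simp: D1_def D_def Gs_def)
        have "x = x'" "z \<otimes> inv x = z' \<otimes> inv x" using eq p by auto
        then show "p = q" using p X by auto
      qed
      have "(\<lambda>(x,z). (z \<otimes> inv x, x)) ` D1 \<subseteq> Tg"
      proof
        fix q assume "q \<in> (\<lambda>(x,z). (z \<otimes> inv x, x)) ` D1"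
        then obtain x z where q: "q = (z \<otimes> inv x, x)" and xG: "x \<in> Gs" and zU: "z \<in> U"
          and sz: "\<sigma> z = \<sigma> x" and fz: "f z = - f x"
          by (auto simp: D1_def D_def)
        have xU: "x \<in> U" using xG by (auto simp: Gs_def)
        have xX: "x \<in> carrier G" and zX: "z \<in> carrier G" using xU zU UX by auto
        have hX: "z \<otimes> inv x \<in> carrier G" using xX zX by simp
        have "\<sigma> (z \<otimes> inv x) = 1" using mult[OF zX inv_closed[OF xX]] sinv[OF xX] sz spm[of x] by auto
        moreover have "z \<otimes> inv x \<otimes> x = z" using xX zX by (simp add: m_assoc)
        ultimately show "q \<in> Tg" using q hX xU zU fz by (auto simp: Tg_def H_def T_def)
      qed
      then show ?thesis using card_inj_on_le[OF inj _ finTg] by blast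
    qed
    have c2: "card D2 \<le> card Tg"
    proof -
      have inj: "inj_on (\<lambda>(x,z). (z \<otimes> inv (x \<otimes> s), x \<otimes> s)) D2"
      proof (rule inj_onI)
        fix p q assume "p \<in> D2" "q \<in> D2" and eq: "(\<lambda>(x,z). (z \<otimes> inv (x \<otimes> s), x \<otimes> s)) p = (\<lambda>(x,z). (z \<otimes> inv (x \<otimes> s), x \<otimes> s)) q"
        obtain x z x' z' where p: "p = (x,z)" "q = (x',z')" by (cases p, cases q) auto
        have X: "x \<in> carrier G" "z \<in> carrier G" "x' \<in> carrier G" "z' \<in> carrier G"
          using \<open>p \<in> D2\<close> \<open>q \<in> D2\<close> p UX by (auto simp: D2_def D_def Gs_def)
        have e1: "x \<otimes> s = x' \<otimes> s" and e2: "z \<otimes> inv (x \<otimes> s) = z' \<otimes> inv (x' \<otimes> s)" using eq p by auto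
        have "x = x'" using e1 X sX by simp
        then show "p = q" using p X e2 sX by auto
      qed
      have "(\<lambda>(x,z). (z \<otimes> inv (x \<otimes> s), x \<otimes> s)) ` D2 \<subseteq> Tg"
      proof
        fix q assume "q \<in> (\<lambda>(x,z). (z \<otimes> inv (x \<otimes> s), x \<otimes> s)) ` D2"
        then obtain x z where q: "q = (z \<otimes> inv (x \<otimes> s), x \<otimes> s)" and xG: "x \<in> Gs" and zU: "z \<in> U"
          and sz: "\<sigma> z = \<sigma> x" and fz: "f z = f x"
          by (auto simp: D2_def D_def)
        have xU: "x \<in> U" and xsU: "x \<otimes> s \<in> U" and fxs: "f (x \<otimes> s) = - f x" using xG by (auto simp: Gs_def)
        have xX: "x \<in> carrier G" and zX: "z \<in> carrier G" using xU zU UX by auto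
        have ysX: "x \<otimes> s \<in> carrier G" using xX sX by simp
        have hX: "z \<otimes> inv (x \<otimes> s) \<in> carrier G" using ysX zX by simp
        have sxs: "\<sigma> (x \<otimes> s) = \<sigma> x" using mult[OF xX sX] ss by simp
        have "\<sigma> (z \<otimes> inv (x \<otimes> s)) = 1"
          using mult[OF zX inv_closed[OF ysX]] sinv[OF ysX] sxs sz spm[of x] by auto
        moreover have "z \<otimes> inv (x \<otimes> s) \<otimes> (x \<otimes> s) = z" using ysX zX by (simp add: m_assoc)
        moreover have "f z = - 1 * f (x \<otimes> s)" using fz fxs by simp
        ultimately show "q \<in> Tg" using q hX xsU zU by (auto simp: Tg_def H_def T_def)
      qed
      then show ?thesis using card_inj_on_le[OF inj _ finTg] by blast
    qed
    have "card D \<le> card (D1 \<union> D2)" using DD finD by (intro card_mono) (auto simp: D1_def D2_def)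
    also have "\<dots> \<le> card D1 + card D2" by (rule card_Un_le)
    finally show ?thesis using c1 c2 by linarith
  qed
  have cls: "n \<le> 2 * card {z \<in> carrier G. \<sigma> z = \<sigma> x}" if xX: "x \<in> carrier G" for x
  proof -
    define C where "C = {z \<in> carrier G. \<sigma> z = \<sigma> x}"
    define C' where "C' = {z \<in> carrier G. \<sigma> z \<noteq> \<sigma> x}"
    have CC: "carrier G = C \<union> C'" "C \<inter> C' = {}" by (auto simp: C_def C'_def)
    have nCC: "n = card C + card C'" unfolding n_def using CC finX
      by (metis card_Un_disjoint finite_Un)
    have "card C' \<le> card C"
    proof (cases "C' = {}")
      case True then show ?thesis by simp
    next
      case False
      then obtain k where kC: "k \<in> C'" by auto
      have kX: "k \<in> carrier G" and sk: "\<sigma> k = - \<sigma> x" using kC spm[of k] spm[of x] by (auto simp: C'_def)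
      define g where "g = k \<otimes> inv x"
      have gX: "g \<in> carrier G" using kX xX by (simp add: g_def)
      have sg: "\<sigma> g = -1" using mult[OF kX inv_closed[OF xX]] sinv[OF xX] sk spm[of x] by (auto simp: g_def)
      have inj: "inj_on (\<lambda>z. g \<otimes> z) C'" using gX by (auto simp: inj_on_def C'_def)
      have "(\<lambda>z. g \<otimes> z) ` C' \<subseteq> C"
      proof
        fix y assume "y \<in> (\<lambda>z. g \<otimes> z) ` C'"
        then obtain z where y: "y = g \<otimes> z" and zX: "z \<in> carrier G" and sz: "\<sigma> z \<noteq> \<sigma> x" by (auto simp: C'_def)
        have "\<sigma> z = - \<sigma> x" using sz spm[of z] spm[of x] by auto
        then show "y \<in> C" using y mult[OF gX zX] sg gX zX by (auto simp: C_def)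
      qed
      then show ?thesis using card_inj_on_le[OF inj] finX by (auto simp: C_def)
    qed
    then show ?thesis using nCC by (simp add: C_def)
  qed
  have D_ge: "card Gs * (n - 2 * w) \<le> 2 * card D"
  proof -
    have row: "n - 2 * w \<le> 2 * card {z \<in> U. \<sigma> z = \<sigma> x}" if xG: "x \<in> Gs" for x
    proof -
      have xX: "x \<in> carrier G" using xG UX by (auto simp: Gs_def)
      have "{z \<in> carrier G. \<sigma> z = \<sigma> x} \<subseteq> {z \<in> U. \<sigma> z = \<sigma> x} \<union> W" by (auto simp: W_def)
      then have "card {z \<in> carrier G. \<sigma> z = \<sigma> x} \<le> card ({z \<in> U. \<sigma> z = \<sigma> x} \<union> W)"
        by (rule card_mono[rotated]) (auto simp: finU finW)
      also have "\<dots> \<le> card {z \<in> U. \<sigma> z = \<sigma> x} + w" unfolding w_def by (rule card_Un_le)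
      finally show ?thesis using cls[OF xX] by linarith
    qed
    have "card Gs * (n - 2 * w) = (\<Sum>x\<in>Gs. n - 2 * w)" by simp
    also have "\<dots> \<le> (\<Sum>x\<in>Gs. 2 * card {z \<in> U. \<sigma> z = \<sigma> x})" by (rule sum_mono) (rule row)
    also have "\<dots> = 2 * card D" unfolding D_def using finGs finU
      by (simp add: sum_distrib_left)
    finally show ?thesis .
  qed
  have wm: "100 * w \<le> m" using wsmall by (simp add: w_def m_def)
  have key: "50 * card Gs * (n - 2 * w) \<le> 4 * n * m" using D_ge D_le Tg_le by linarith
  have n2w: "49 * n \<le> 50 * (n - 2 * w)" using wm mn by linarith
  have "49 * card Gs * n \<le> 4 * n * m"
  proof -
    have "49 * card Gs * n = card Gs * (49 * n)" by simp
    also have "\<dots> \<le> card Gs * (50 * (n - 2 * w))" using n2w by (rule mult_left_mono) simp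
    also have "\<dots> = 50 * card Gs * (n - 2 * w)" by simp
    finally show ?thesis using key by linarith
  qed
  then have "(49 * card Gs) * n \<le> (4 * m) * n" by (simp add: mult.commute mult.left_commute)
  moreover have "n > 0" using mpos mn by simp
  ultimately have g: "49 * card Gs \<le> 4 * m" by simp
  show ?thesis using g cover Os_le Bs_le wm by (simp add: m_def)
qed

end


theorem theorem4:
  fixes G :: "('a, 'b) monoid_scheme" and S :: "'a set"
  assumes "group G"
    and "finite (carrier G)"
    and "S \<subseteq> carrier G"
    and "generate G S = carrier G"
    and "\<forall>s\<in>S. inv\<^bsub>G\<^esub> s \<in> S"
    and "\<not> cay_bipartite G S"
    and "bipartiteness G S < 1 / (16 * real (card S))"
  shows "cheeger G S \<le> 100 * bipartiteness G S / (1 - 16 * real (card S) * bipartiteness G S)"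
proof -
  note grp = assms(1) and finX = assms(2) and SX = assms(3) and Sinv = assms(5)
    and nb = assms(6) and small = assms(7)
  interpret group G by (rule grp)
  define n where "n = card (carrier G)"
  define d where "d = card S"
  define \<beta> where "\<beta> = bipartiteness G S"
  define c where "c = cheeger G S"
  let ?P = "{(L,R). L \<subseteq> carrier G \<and> R \<subseteq> carrier G \<and> L \<inter> R = {} \<and> L \<union> R \<noteq> {}}"
  have Bset: "{bval G S L R | L R. L \<subseteq> carrier G \<and> R \<subseteq> carrier G \<and> L \<inter> R = {} \<and> L \<union> R \<noteq> {}}
      = (\<lambda>(L,R). bval G S L R) ` ?P" (is "?A = ?B")
  proof
    show "?A \<subseteq> ?B"
    proof
      fix v assume "v \<in> ?A"
      then obtain L R where v: "v = bval G S L R" and c: "L \<subseteq> carrier G \<and> R \<subseteq> carrier G \<and> L \<inter> R = {} \<and> L \<union> R \<noteq> {}"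
        by blast
      have "(L,R) \<in> ?P" using c by simp
      then show "v \<in> ?B" using v by (intro image_eqI[of _ _ "(L,R)"]) simp_all
    qed
  next
    show "?B \<subseteq> ?A"
    proof
      fix v assume "v \<in> ?B"
      then obtain p where p: "p \<in> ?P" and v: "v = (\<lambda>(L,R). bval G S L R) p" by blast
      obtain L R where pLR: "p = (L,R)" by (cases p)
      have c: "L \<subseteq> carrier G \<and> R \<subseteq> carrier G \<and> L \<inter> R = {} \<and> L \<union> R \<noteq> {}"
        using p unfolding pLR by (simp only: mem_Collect_eq prod.case simp_thms)
      have v': "v = bval G S L R" using v unfolding pLR by (simp only: prod.case)
      show "v \<in> ?A" using v' c by blast
    qed
  qed
  have finP: "finite ?P"
    by (rule finite_subset[of _ "Pow (carrier G) \<times> Pow (carrier G)"]) (auto simp: finX)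
  have neP: "?P \<noteq> {}"
  proof -
    have "(carrier G, {}) \<in> ?P" using one_closed by auto
    then show ?thesis by blast
  qed
  have "\<beta> \<in> (\<lambda>(L,R). bval G S L R) ` ?P"
    unfolding \<beta>_def bipartiteness_def Bset using finP neP by (intro Min_in) auto
  then obtain L R where LX: "L \<subseteq> carrier G" and RX: "R \<subseteq> carrier G" and disj: "L \<inter> R = {}"
    and Une: "L \<union> R \<noteq> {}" and \<beta>eq: "\<beta> = bval G S L R" by auto
  have dpos: "d > 0"
  proof (rule ccontr)
    assume "\<not> d > 0"
    moreover have "finite S" using SX finX finite_subset by blast
    ultimately have "S = {}" by (simp add: d_def)
    then have "cay_bipartite G S" unfolding cay_bipartite_def
      by (intro exI[of _ "carrier G"] exI[of _ "{}"]) (auto simp: cay_adj_def)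
    then show False using nb by simp
  qed
  define m where "m = card (L \<union> R)"
  have finU: "finite (L \<union> R)" using LX RX finX finite_subset by blast
  have mpos: "m > 0" using Une finU by (simp add: m_def card_gt_0_iff)
  define eb where "eb = real (e_count G S L L + e_count G S R R)"
  define bU where "bU = real (card (edge_boundary G S (L \<union> R)))"
  have bf: "\<beta> * (real d * real m) = eb + bU"
    using \<beta>eq dpos mpos by (simp add: bval_def eb_def bU_def d_def m_def)
  have eb0: "eb \<ge> 0" and bU0: "bU \<ge> 0" by (simp_all add: eb_def bU_def)
  have \<beta>0: "\<beta> \<ge> 0"
  proof -
    have "\<beta> * (real d * real m) \<ge> 0" using bf eb0 bU0 by simp
    moreover have "real d * real m > 0" using dpos mpos by simp
    ultimately show ?thesis by (simp add: zero_le_mult_iff)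
  qed
  have bd1: "\<beta> * real d < 1 / 16" using small dpos by (simp add: \<beta>_def d_def field_simps)
  have one_notin: "\<one>\<^bsub>G\<^esub> \<notin> S"
  proof
    assume oS: "\<one>\<^bsub>G\<^esub> \<in> S"
    have adjxx: "cay_adj G S x x" if "x \<in> carrier G" for x using that oS unfolding cay_adj_def by (intro conjI bexI[of _ "\<one>\<^bsub>G\<^esub>"]) simp_all
    have fin2: "finite {(a, b). a \<in> A \<and> b \<in> A \<and> cay_adj G S a b}" if "A \<subseteq> carrier G" for A
      by (rule finite_subset[of _ "carrier G \<times> carrier G"]) (use that finX in auto)
    have ge: "card A \<le> e_count G S A A" if A: "A \<subseteq> carrier G" for A
    proof -
      have "(\<lambda>x. (x,x)) ` A \<subseteq> {(a, b). a \<in> A \<and> b \<in> A \<and> cay_adj G S a b}" using A adjxx by auto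
      then have "card ((\<lambda>x. (x,x)) ` A) \<le> e_count G S A A" unfolding e_count_def
        using fin2[OF A] by (rule card_mono[rotated])
      moreover have "card ((\<lambda>x. (x,x)) ` A) = card A" by (rule card_image) (auto simp: inj_on_def)
      ultimately show ?thesis by simp
    qed
    have "m = card L + card R" unfolding m_def using disj finU by (simp add: card_Un_disjoint)
    then have "real m \<le> eb" using ge[OF LX] ge[OF RX] by (simp add: eb_def)
    then have "real m \<le> \<beta> * real d * real m" using bf bU0 by (simp add: mult.assoc)
    moreover have "\<beta> * real d * real m < 1 / 16 * real m" using bd1 mpos by (intro mult_strict_right_mono) auto
    ultimately show False using mpos by simp
  qed
  interpret cay2 G S L R
    by unfold_locales (use finX SX Sinv one_notin LX RX disj in auto)
  have Udef: "U = L \<union> R" by (simp add: U_def)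
  have chg: "c * (real d * real (card A)) \<le> K"
    if A: "A \<subseteq> carrier G" "A \<noteq> {}" "2 * card A \<le> n" and K: "real (card (edge_boundary G S A)) \<le> K"
    for A K
  proof -
    have finA: "finite A" using A finX finite_subset by blast
    have cA: "card A > 0" using A finA by (simp add: card_gt_0_iff)
    let ?Q = "{A. A \<subseteq> carrier G \<and> 0 < card A \<and> real (card A) \<le> real (card (carrier G)) / 2}"
    have Cset: "{real (card (edge_boundary G S A)) / (real (card S) * real (card A)) | A.
      A \<subseteq> carrier G \<and> 0 < card A \<and> real (card A) \<le> real (card (carrier G)) / 2}
      = (\<lambda>A. real (card (edge_boundary G S A)) / (real (card S) * real (card A))) ` ?Q" by auto
    have "finite ?Q" by (rule finite_subset[of _ "Pow (carrier G)"]) (auto simp: finX)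
    moreover have "A \<in> ?Q" using A cA by (auto simp: n_def)
    ultimately have "c \<le> real (card (edge_boundary G S A)) / (real d * real (card A))"
      unfolding c_def cheeger_def Cset d_def by (intro Min_le) auto
    then have "c * (real d * real (card A)) \<le> real (card (edge_boundary G S A))"
      using dpos cA by (simp add: le_divide_eq)
    then show ?thesis using K by simp
  qed
  have OutU: "real (card (Out U)) \<le> bU" using Out_le_bd[of U] by (simp add: bU_def Udef)
  have Bad_le: "real (card Bad) \<le> eb" using card_Bad by (simp add: eb_def)
  have c100: "c \<le> 100 * \<beta>"
  proof (rule ccontr)
    assume "\<not> c \<le> 100 * \<beta>"
    then have cbig: "c > 100 * \<beta>" by simp
    have mnX: "m \<le> n" using card_mono[OF finX UX] by (simp add: n_def m_def Udef)
    have step1: "n < 2 * m"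
    proof (rule ccontr)
      assume "\<not> n < 2 * m"
      then have "c * (real d * real m) \<le> bU"
        using chg[of "L \<union> R" bU] LX RX Une by (simp add: m_def bU_def)
      also have "\<dots> \<le> \<beta> * (real d * real m)" using bf eb0 by simp
      finally have "c \<le> \<beta>" using dpos mpos by simp
      then show False using cbig \<beta>0 by simp
    qed
    have cardW: "card W + m = n" unfolding W_def m_def n_def Udef
      using card_Diff_subset[OF finU] UX Udef card_mono[OF finX UX] by (simp add: Udef)
    have wsmall: "100 * card W \<le> card U"
    proof (rule ccontr)
      assume nw: "\<not> 100 * card W \<le> card U"
      then have Wne: "W \<noteq> {}" by auto
      have "card (edge_boundary G S W) \<le> card (Out W)" by (rule bd_le_Out)
      also have "\<dots> \<le> card (Out U)" unfolding W_def by (rule Out_compl)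
      finally have "real (card (edge_boundary G S W)) \<le> bU" using OutU by simp
      then have "c * (real d * real (card W)) \<le> bU"
        using chg[of W bU] Wne step1 cardW by (auto simp: W_def)
      also have "\<dots> \<le> \<beta> * (real d * real m)" using bf eb0 by simp
      finally have "real d * (c * real (card W)) \<le> real d * (\<beta> * real m)" by (simp add: algebra_simps)
      then have cw: "c * real (card W) \<le> \<beta> * real m" using dpos by simp
      have wpos: "real (card W) > 0" using Wne finW by (simp add: card_gt_0_iff)
      have "100 * \<beta> * real (card W) < c * real (card W)" using cbig wpos by simp
      moreover have "\<beta> * real m \<le> \<beta> * (100 * real (card W))"
        using nw \<beta>0 by (intro mult_left_mono) (auto simp: m_def Udef)
      ultimately show False using cw by simp
    qed
    have dich1: "50 * card (T h e) < card U"
      if h: "h \<in> carrier G" and e: "e = 1 \<or> e = -1" and half: "2 * card (T h e) \<le> n" for h e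
    proof (rule ccontr)
      assume nt: "\<not> 50 * card (T h e) < card U"
      then have Tne: "T h e \<noteq> {}" using mpos by (auto simp: m_def Udef)
      have "card (edge_boundary G S (T h e)) \<le> card (Out (T h e))" by (rule bd_le_Out)
      also have "\<dots> \<le> 2 * card (Out U) + 2 * card Bad" by (rule Out_T[OF h e])
      finally have "real (card (edge_boundary G S (T h e))) \<le> 2 * bU + 2 * eb"
        using OutU Bad_le by linarith
      moreover have "T h e \<subseteq> carrier G" using TU UX by blast
      ultimately have "c * (real d * real (card (T h e))) \<le> 2 * bU + 2 * eb"
        using chg[of "T h e" "2 * bU + 2 * eb"] Tne half by blast
      also have "\<dots> = 2 * \<beta> * (real d * real m)" using bf by simp
      finally have "real d * (c * real (card (T h e))) \<le> real d * (2 * \<beta> * real m)" by (simp add: algebra_simps)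
      then have ct: "c * real (card (T h e)) \<le> 2 * \<beta> * real m" using dpos by simp
      have tpos: "real (card (T h e)) > 0" using Tne finT by (simp add: card_gt_0_iff)
      have "100 * \<beta> * real (card (T h e)) < c * real (card (T h e))" using cbig tpos by simp
      moreover have "2 * \<beta> * real m \<le> 2 * \<beta> * (50 * real (card (T h e)))"
        using nt \<beta>0 by (intro mult_left_mono) (auto simp: m_def Udef)
      ultimately show False using ct by simp
    qed
    have dich: "\<forall>h\<in>carrier G. 50 * card (T h 1) < card U \<or> 50 * card (T h (-1)) < card U"
    proof
      fix h assume h: "h \<in> carrier G"
      have "card (T h 1 \<union> T h (-1)) \<le> n" unfolding n_def
        using TU UX by (intro card_mono finX) auto
      then have "card (T h 1) + card (T h (-1)) \<le> n" using T_disj finT by (simp add: card_Un_disjoint)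
      then have "2 * card (T h 1) \<le> n \<or> 2 * card (T h (-1)) \<le> n" by linarith
      then show "50 * card (T h 1) < card U \<or> 50 * card (T h (-1)) < card U"
        using dich1[OF h] by auto
    qed
    have "card U \<le> 2 * card Bad" using main[OF _ wsmall dich nb] Une by (simp add: Udef)
    then have "real m \<le> 2 * eb" using Bad_le by (simp add: m_def Udef)
    also have "\<dots> \<le> 2 * (\<beta> * real d * real m)" using bf bU0 by (simp add: mult.assoc)
    also have "\<dots> < 2 * (1/16 * real m)" using bd1 mpos by (intro mult_strict_left_mono mult_strict_right_mono) auto
    finally show False using mpos by simp
  qed
  have den: "0 < 1 - 16 * real d * \<beta>" and den1: "1 - 16 * real d * \<beta> \<le> 1"
    using bd1 \<beta>0 dpos by (auto simp: algebra_simps)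
  have "100 * \<beta> \<le> 100 * \<beta> / (1 - 16 * real d * \<beta>)"
    using den den1 \<beta>0 by (simp add: le_divide_eq mult_left_le)
  then show ?thesis using c100 by (simp add: c_def \<beta>_def d_def)
qed

end
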